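(* Fix a prime power $q$ and $u\ge1$. Let $(C_i)_{i\ge1}$ be a family of linear $[n_i,k_i,d_i]$ codes over $\mathbb{F}_{q^u}$ with $n_i\to\infty$, $(k_i)$ nondecreasing, $\liminf_{i\to\infty}k_i/n_i\ge\alpha$ and $\liminf_{i\to\infty}d_i/n_i\ge\beta$ for some constants $0<\alpha,\beta<1$, and suppose there is a constant $W$ with $n_i\le Wn_{i-1}$ for all $i\ge2$. Then for every constant $c>0$ there are constants $R_1,A,B>0$ and $p_0\in(0,1)$ (depending only on $q,u$, the family, and $c$) such that the following holds. For every $n\ge2$ and every $[n,k]$ linear code $C\subseteq\mathbb{F}_q^n$ with $k<n$ and parity-check matrix $H\in\mathbb{F}_q^{(n-k)\times n}$ of rank $n-k$, there is an index $i$ with $k_i\ge n-k$ and $n_i\le A n$ such that, letting $\bar G'_i$ be the $(n-k)\times n_i$ matrix formed by any $n-k$ rows of a generator matrix of $C_i$, the list $S$ of rows of $\bar G_i'^{\,T}H$ is a test set for $C$ with designed probability $p_0$, and Algorithm DetermineCodeword run with this $S$ and $R=\lceil R_1\log n\rceil$ rounds: performs at most $B\,u\,n\log n$ operations in $\mathbb{F}_q$; uses storage of at most $B\,u\,n^2$ elements of $\mathbb{F}_q$ for $S$; always returns True when $\mathbf{x}\in C$; and returns True with probability at most $n^{-c}$ when $\mathbf{x}\notin C$.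
   Context: $\mathbb{F}_{q^u}$ is the degree-$u$ extension of $\mathbb{F}_q$, whose elements are represented as vectors of length $u$ over $\mathbb{F}_q$; $(\mathbf{x},\mathbf{y})=\sum_{j=1}^n x_jy_j$. A test set with designed probability $p\in(0,1)$ for $C$ is a finite nonempty collection $S$ of vectors in $\mathbb{F}_{q^u}^n$ (counted with multiplicity) such that for every $\mathbf{x}\in\mathbb{F}_q^n$: (1) $\mathbf{x}\in C$ iff $(\mathbf{x},\mathbf{y})=0$ for all $\mathbf{y}\in S$; (2) if some $\mathbf{y}\in S$ has $(\mathbf{x},\mathbf{y})\ne0$, then $\#\{\mathbf{y}\in S:(\mathbf{x},\mathbf{y})\ne0\}\ge(1-p)\#S$. Algorithm DetermineCodeword (with $R$ rounds, test set $S$ precomputed) on input $\mathbf{x}\in\mathbb{F}_q^n$: for $i=1,\dots,R$, choose $\mathbf{y}\in S$ uniformly at random, independently of previous rounds, and compute $z=(\mathbf{x},\mathbf{y})$; if $z\ne0$, return False. If all rounds give $z=0$, return True. *)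

theory Defs
  imports "HOL-Probability.Probability" "HOL-Library.Function_Algebras"
begin

text \<open>A vector of length n over a field is represented as a function
  nat => 'a that vanishes outside the index range 0..n-1.\<close>

definition vecs :: "nat \<Rightarrow> (nat \<Rightarrow> 'a::zero) set" where
  "vecs n = {v. \<forall>j\<ge>n. v j = 0}"

definition fscale :: "'a::field \<Rightarrow> (nat \<Rightarrow> 'a) \<Rightarrow> (nat \<Rightarrow> 'a)" where
  "fscale c v = (\<lambda>j. c * v j)"

lemma vector_space_fscale: "vector_space (fscale :: 'a::field \<Rightarrow> _)"
  by unfold_locales (auto simp: fscale_def algebra_simps fun_eq_iff)

definition hweight :: "nat \<Rightarrow> (nat \<Rightarrow> 'a::zero) \<Rightarrow> nat" where
  "hweight n v = card {j. j < n \<and> v j \<noteq> 0}"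

definition min_dist :: "nat \<Rightarrow> (nat \<Rightarrow> 'a::zero) set \<Rightarrow> nat" where
  "min_dist n C = Min {hweight n c | c. c \<in> C \<and> c \<noteq> 0}"

definition lin_code :: "nat \<Rightarrow> nat \<Rightarrow> (nat \<Rightarrow> 'a::field) set \<Rightarrow> bool" where
  "lin_code n k C \<longleftrightarrow> C \<subseteq> vecs n \<and> module.subspace fscale C \<and> vector_space.dim fscale C = k"

definition lin_code_d :: "nat \<Rightarrow> nat \<Rightarrow> nat \<Rightarrow> (nat \<Rightarrow> 'a::field) set \<Rightarrow> bool" where
  "lin_code_d n k d C \<longleftrightarrow> lin_code n k C \<and> min_dist n C = d"

text \<open>Matrices are lists of rows; each row is a vector of length n.
  The rank of a matrix is the dimension of its row space.\<close>

definition mat_rank :: "(nat \<Rightarrow> 'a::field) list \<Rightarrow> nat" where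
  "mat_rank M = vector_space.dim fscale (set M)"

definition is_matrix :: "nat \<Rightarrow> nat \<Rightarrow> (nat \<Rightarrow> 'a::zero) list \<Rightarrow> bool" where
  "is_matrix m n M \<longleftrightarrow> length M = m \<and> set M \<subseteq> vecs n"

definition parity_check :: "nat \<Rightarrow> nat \<Rightarrow> (nat \<Rightarrow> 'a::field) set \<Rightarrow> (nat \<Rightarrow> 'a) list \<Rightarrow> bool" where
  "parity_check n k C H \<longleftrightarrow> is_matrix (n - k) n H \<and> mat_rank H = n - k \<and>
     C = {x \<in> vecs n. \<forall>h\<in>set H. (\<Sum>j<n. x j * h j) = 0}"

definition gen_matrix :: "nat \<Rightarrow> (nat \<Rightarrow> 'a::field) set \<Rightarrow> (nat \<Rightarrow> 'a) list \<Rightarrow> bool" where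
  "gen_matrix n C G \<longleftrightarrow> set G \<subseteq> vecs n \<and> module.span fscale (set G) = C
     \<and> length G = vector_space.dim fscale C"

definition field_ext :: "('f::{finite,field} \<Rightarrow> 'e::{finite,field}) \<Rightarrow> nat \<Rightarrow> bool" where
  "field_ext emb u \<longleftrightarrow> emb 0 = 0 \<and> emb 1 = 1 \<and> (\<forall>a b. emb (a + b) = emb a + emb b)
     \<and> (\<forall>a b. emb (a * b) = emb a * emb b) \<and> CARD('e) = CARD('f) ^ u"

definition ip :: "nat \<Rightarrow> ('f \<Rightarrow> 'e::comm_ring_1) \<Rightarrow> (nat \<Rightarrow> 'f) \<Rightarrow> (nat \<Rightarrow> 'e) \<Rightarrow> 'e" where
  "ip n emb x y = (\<Sum>j<n. emb (x j) * y j)"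

definition test_set :: "nat \<Rightarrow> ('f::{finite,field} \<Rightarrow> 'e::{finite,field}) \<Rightarrow> (nat \<Rightarrow> 'f) set
     \<Rightarrow> real \<Rightarrow> (nat \<Rightarrow> 'e) multiset \<Rightarrow> bool" where
  "test_set n emb C p S \<longleftrightarrow> 0 < p \<and> p < 1 \<and> S \<noteq> {#} \<and> set_mset S \<subseteq> vecs n \<and>
     (\<forall>x\<in>vecs n.
        (x \<in> C \<longleftrightarrow> (\<forall>y\<in>#S. ip n emb x y = 0)) \<and>
        ((\<exists>y\<in>#S. ip n emb x y \<noteq> 0) \<longrightarrow>
           real (size (filter_mset (\<lambda>y. ip n emb x y \<noteq> 0) S)) \<ge> (1 - p) * real (size S)))"

text \<open>Cost (in operations of F_q) of one evaluation of (x,y) with x in F_q^n and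
  y in F_{q^u}^n, elements of F_{q^u} represented as length-u vectors over F_q:
  n scalar-times-vector products (u multiplications each) and n-1 vector
  additions (u additions each).\<close>

definition ip_cost :: "nat \<Rightarrow> nat \<Rightarrow> nat" where
  "ip_cost u n = u * n + u * (n - 1)"

text \<open>DetermineCodeword with R rounds: returns the distribution of the pair
  (output, number of F_q operations performed).\<close>

fun determine_codeword :: "nat \<Rightarrow> nat \<Rightarrow> ('f \<Rightarrow> 'e::comm_ring_1) \<Rightarrow> (nat \<Rightarrow> 'e) multiset
     \<Rightarrow> nat \<Rightarrow> (nat \<Rightarrow> 'f) \<Rightarrow> (bool \<times> nat) pmf" where
  "determine_codeword u n emb S 0 x = return_pmf (True, 0)"
| "determine_codeword u n emb S (Suc r) x =
     pmf_of_multiset S \<bind> (\<lambda>y.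
       if ip n emb x y \<noteq> 0 then return_pmf (False, ip_cost u n)
       else map_pmf (\<lambda>(b, c). (b, c + ip_cost u n)) (determine_codeword u n emb S r x))"

text \<open>Storage (in elements of F_q) of the test set S of vectors in F_{q^u}^n.\<close>

definition storage :: "nat \<Rightarrow> nat \<Rightarrow> 'a multiset \<Rightarrow> nat" where
  "storage u n S = u * n * size S"

text \<open>The rows of G'^T H, where G' is (n-k) x m over F_{q^u} and H is (n-k) x n over F_q.\<close>

definition rows_GtH :: "nat \<Rightarrow> ('f \<Rightarrow> 'e::comm_ring_1) \<Rightarrow> (nat \<Rightarrow> 'e) list \<Rightarrow> (nat \<Rightarrow> 'f) list
     \<Rightarrow> (nat \<Rightarrow> 'e) list" where
  "rows_GtH m emb G' H =
     map (\<lambda>j. (\<lambda>t. \<Sum>l<length G'. (G' ! l) j * emb ((H ! l) t))) [0..<m]"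

end

theory Submission
  imports Defs
begin


interpretation fs: vector_space "fscale :: 'a::field \<Rightarrow> (nat \<Rightarrow> 'a) \<Rightarrow> (nat \<Rightarrow> 'a)"
  by (rule vector_space_fscale)

lemma sum_fun_apply: "(\<Sum>i\<in>A. f i) x = (\<Sum>i\<in>A. (f i x :: 'b::comm_monoid_add))"
  by (induction A rule: infinite_finite_induct) (auto simp: plus_fun_def zero_fun_def)

lemma emb_sum:
  assumes "field_ext emb u"
  shows "emb (\<Sum>i\<in>A. f i) = (\<Sum>i\<in>A. emb (f i))"
  using assms by (induction A rule: infinite_finite_induct) (auto simp: field_ext_def)

lemma emb_eq_0:
  assumes "field_ext emb u"
  shows "emb a = 0 \<longleftrightarrow> a = 0"
proof
  assume a: "emb a = 0"
  show "a = 0"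
  proof (rule ccontr)
    assume "a \<noteq> 0"
    then have "emb (a * inverse a) = 1" using assms by (simp add: field_ext_def)
    then show False using a assms by (simp add: field_ext_def)
  qed
qed (use assms in \<open>simp add: field_ext_def\<close>)

lemma ip_row:
  assumes ext: "field_ext emb u"
  shows "ip n emb x (\<lambda>t. \<Sum>l<N. (G' ! l) j * emb ((H ! l) t))
       = (\<Sum>l<N. (G' ! l) j * emb (\<Sum>t<n. x t * (H ! l) t))"
proof -
  have "ip n emb x (\<lambda>t. \<Sum>l<N. (G' ! l) j * emb ((H ! l) t))
      = (\<Sum>t<n. \<Sum>l<N. (G' ! l) j * (emb (x t) * emb ((H ! l) t)))"
    unfolding ip_def by (simp add: sum_distrib_left mult_ac)
  also have "\<dots> = (\<Sum>l<N. \<Sum>t<n. (G' ! l) j * (emb (x t) * emb ((H ! l) t)))"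
    by (rule sum.swap)
  also have "\<dots> = (\<Sum>l<N. (G' ! l) j * emb (\<Sum>t<n. x t * (H ! l) t))"
    using ext by (simp add: emb_sum[OF ext] sum_distrib_left field_ext_def)
  finally show ?thesis .
qed

lemma test_set_lemma:
  fixes emb :: "'f::{finite,field} \<Rightarrow> 'e::{finite,field}"
    and D :: "(nat \<Rightarrow> 'e) set" and C :: "(nat \<Rightarrow> 'f) set"
  assumes ext: "field_ext emb u"
    and D: "lin_code_d m kk d D" and G: "gen_matrix m D G"
    and idx: "distinct idx" "length idx = n - k" "\<forall>l\<in>set idx. l < kk"
    and H: "parity_check n k C H"
    and m0: "0 < m" and p: "0 < p" "p < 1" and dm: "(1 - p) * real m \<le> real d"
  shows "test_set n emb C p (mset (rows_GtH m emb (map (\<lambda>l. G ! l) idx) H))"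
proof -
  define G' where "G' = map (\<lambda>l. G ! l) idx"
  define N where "N = n - k"
  define row where "row j = (\<lambda>t. \<Sum>l<N. (G' ! l) j * emb ((H ! l) t))" for j
  define S where "S = mset (rows_GtH m emb G' H)"
  have lenG': "length G' = N" using idx by (simp add: G'_def N_def)
  have S_eq: "S = mset (map row [0..<m])"
    unfolding S_def rows_GtH_def row_def lenG' by simp
  have lenH: "length H = N" and Hv: "set H \<subseteq> vecs n"
    using H by (auto simp: parity_check_def is_matrix_def N_def)
  have C_eq: "C = {x \<in> vecs n. \<forall>h\<in>set H. (\<Sum>j<n. x j * h j) = 0}"
    using H by (simp add: parity_check_def)
  have DD: "D \<subseteq> vecs m" "fs.dim D = kk" "min_dist m D = d"
    using D by (auto simp: lin_code_d_def lin_code_def)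
  have GG: "set G \<subseteq> vecs m" "fs.span (set G) = D" "length G = fs.dim D"
    using G by (auto simp: gen_matrix_def)
  have lenG: "length G = kk" using GG DD by simp
  obtain B where B: "B \<subseteq> set G" "fs.independent B" "set G \<subseteq> fs.span B" "card B = fs.dim (set G)"
    by (rule fs.basis_exists)
  have dimG: "fs.dim (set G) = length G"
    using GG fs.dim_span[of "set G"] by simp
  have cB: "card B \<le> card (set G)" by (rule card_mono) (use B in auto)
  have "card (set G) \<le> length G" by (rule card_length)
  then have BG: "B = set G" using B dimG cB by (intro card_subset_eq) auto
  then have indep: "fs.independent (set G)" using B by simp
  have "card (set G) = length G" using B BG dimG by simp
  then have distG: "distinct G" by (rule card_distinct)
  have G'in: "G' ! l \<in> set G" if "l < N" for l
    using that idx lenG' lenG by (auto simp: G'_def)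
  have G'nth: "G' ! l = G ! (idx ! l)" if "l < N" for l
    using that lenG' by (simp add: G'_def)
  have inj: "inj_on (\<lambda>l. G' ! l) {..<N}"
  proof
    fix a b assume ab: "a \<in> {..<N}" "b \<in> {..<N}" "G' ! a = G' ! b"
    then have "idx ! a < length G" "idx ! b < length G"
      using idx lenG by (auto simp: N_def)
    then have "idx ! a = idx ! b" using ab distG by (simp add: G'nth nth_eq_iff_index_eq)
    then show "a = b" using ab idx by (simp add: N_def nth_eq_iff_index_eq)
  qed
  have Svecs: "set_mset S \<subseteq> vecs n"
  proof
    fix y assume "y \<in># S"
    then obtain j where y: "y = row j" using S_eq by auto
    have "(H ! l) t = 0" if "l < N" "t \<ge> n" for l t
    proof -
      have "H ! l \<in> vecs n" using that Hv lenH nth_mem[of l H] by auto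
      then show ?thesis using that by (simp add: vecs_def)
    qed
    then show "y \<in> vecs n" using ext by (simp add: y row_def vecs_def field_ext_def)
  qed
  have sizeS: "size S = m" using S_eq by simp
  have main: "(x \<in> C \<longleftrightarrow> (\<forall>y\<in>#S. ip n emb x y = 0)) \<and>
        ((\<exists>y\<in>#S. ip n emb x y \<noteq> 0) \<longrightarrow>
           real (size (filter_mset (\<lambda>y. ip n emb x y \<noteq> 0) S)) \<ge> (1 - p) * real (size S))"
    if x: "x \<in> vecs n" for x
  proof -
    define s where "s l = (\<Sum>t<n. x t * (H ! l) t)" for l
    have ipj: "ip n emb x (row j) = (\<Sum>l<N. (G' ! l) j * emb (s l))" for j
      unfolding row_def s_def by (rule ip_row[OF ext])
    have Cs: "x \<in> C \<longleftrightarrow> (\<forall>l<N. s l = 0)"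
      using x lenH unfolding C_eq s_def by (simp add: all_set_conv_all_nth)
    show ?thesis
    proof (cases "x \<in> C")
      case True
      then have "\<forall>y\<in>#S. ip n emb x y = 0"
        using Cs ext by (auto simp: S_eq ipj field_ext_def)
      then show ?thesis using True by auto
    next
      case False
      then obtain l0 where l0: "l0 < N" "s l0 \<noteq> 0" using Cs by auto
      define v where "v = (\<Sum>l<N. fscale (emb (s l)) (G' ! l))"
      have vj: "v j = ip n emb x (row j)" for j
        by (simp add: v_def ipj sum_fun_apply fscale_def mult.commute)
      have vD: "v \<in> D"
        unfolding v_def GG(2)[symmetric]
        by (intro fs.span_sum fs.span_scale fs.span_base G'in) simp
      have v0: "v \<noteq> 0"
      proof
        assume v0: "v = 0"
        define g where "g = (\<lambda>l. G' ! l)"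
        define c where "c b = emb (s (the_inv_into {..<N} g b))" for b
        have inj': "inj_on g {..<N}" using inj by (simp add: g_def)
        have "v = (\<Sum>b\<in>g ` {..<N}. fscale (c b) b)"
          unfolding v_def sum.reindex[OF inj'] c_def
          by (intro sum.cong refl) (simp add: g_def the_inv_into_f_f[OF inj])
        then have "c (g l0) = 0"
          using v0 by (intro fs.independentD[OF indep, of "g ` {..<N}" c]) (auto simp: g_def G'in l0)
        then have "emb (s l0) = 0" using l0 by (simp add: c_def the_inv_into_f_f[OF inj'])
        then show False using l0 emb_eq_0[OF ext] by simp
      qed
      have "v \<in> vecs m" using vD DD by auto
      then obtain j0 where j0: "j0 < m" "v j0 \<noteq> 0"
        using v0 by (auto simp: vecs_def fun_eq_iff) (meson not_le)
      have fin: "finite {hweight m c | c. c \<in> D \<and> c \<noteq> 0}"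
      proof (rule finite_subset[of _ "{..m}"])
        show "{hweight m c | c. c \<in> D \<and> c \<noteq> 0} \<subseteq> {..m}"
        proof
          fix w assume "w \<in> {hweight m c | c. c \<in> D \<and> c \<noteq> 0}"
          then obtain c :: "nat \<Rightarrow> 'e" where "w = hweight m c" by blast
          moreover have "card {j. j < m \<and> c j \<noteq> 0} \<le> card {..<m}"
            by (rule card_mono) auto
          ultimately show "w \<in> {..m}" by (simp add: hweight_def)
        qed
      qed simp
      have "d \<le> hweight m v"
        using DD(3) Min_le[OF fin, of "hweight m v"] vD v0 by (auto simp: min_dist_def)
      also have "hweight m v = size (filter_mset (\<lambda>y. ip n emb x y \<noteq> 0) S)"
      proof -
        have "size (filter_mset (\<lambda>y. ip n emb x y \<noteq> 0) S)
            = length (filter (\<lambda>j. ip n emb x (row j) \<noteq> 0) [0..<m])"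
          unfolding S_eq mset_filter[symmetric] size_mset filter_map length_map
          by (simp add: o_def)
        also have "\<dots> = card ({j. ip n emb x (row j) \<noteq> 0} \<inter> {..<m})"
          by (simp add: distinct_length_filter atLeast0LessThan)
        also have "\<dots> = hweight m v"
          unfolding hweight_def vj by (intro arg_cong[where f=card]) auto
        finally show ?thesis by simp
      qed
      finally have "d \<le> size (filter_mset (\<lambda>y. ip n emb x y \<noteq> 0) S)" .
      moreover have "\<exists>y\<in>#S. ip n emb x y \<noteq> 0"
        using j0 vj by (auto simp: S_eq)
      ultimately show ?thesis using False dm sizeS by auto
    qed
  qed
  show ?thesis
    unfolding test_set_def S_def[unfolded G'_def, symmetric]
    using p Svecs main m0 sizeS by auto
qed



lemma dc_ops:
  assumes "S \<noteq> {#}"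
  shows "(b, ops) \<in> set_pmf (determine_codeword u n emb S r x) \<Longrightarrow> ops \<le> r * ip_cost u n"
proof (induction r arbitrary: b ops)
  case 0 then show ?case by simp
next
  case (Suc r)
  from Suc.prems assms show ?case
    by (auto split: if_splits dest!: Suc.IH)
qed

lemma dc_true:
  assumes "S \<noteq> {#}" "\<forall>y\<in>#S. ip n emb x y = 0"
  shows "(b, ops) \<in> set_pmf (determine_codeword u n emb S r x) \<Longrightarrow> b"
proof (induction r arbitrary: b ops)
  case 0 then show ?case by simp
next
  case (Suc r)
  from Suc.prems assms show ?case
    by (auto split: if_splits dest!: Suc.IH)
qed

lemma dc_prob:
  fixes n :: nat and emb :: "'f \<Rightarrow> 'e::comm_ring_1" and x :: "nat \<Rightarrow> 'f" and S :: "(nat \<Rightarrow> 'e) multiset"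
  assumes S: "S \<noteq> {#}"
  defines "q \<equiv> measure_pmf.prob (pmf_of_multiset S) {y. ip n emb x y = 0}"
  shows "emeasure (measure_pmf (determine_codeword u n emb S r x)) {(b, ops). b} \<le> ennreal (q ^ r)"
proof (induction r)
  case 0 then show ?case by (simp add: measure_pmf.emeasure_le_1)
next
  case (Suc r)
  let ?E = "{(b, ops). b} :: (bool \<times> nat) set"
  have "emeasure (measure_pmf (determine_codeword u n emb S (Suc r) x)) ?E
     = (\<integral>\<^sup>+y. emeasure (measure_pmf (if ip n emb x y \<noteq> 0 then return_pmf (False, ip_cost u n)
       else map_pmf (\<lambda>(b, c). (b, c + ip_cost u n)) (determine_codeword u n emb S r x))) ?E
        \<partial>measure_pmf (pmf_of_multiset S))"
    by simp
  also have "\<dots> \<le> (\<integral>\<^sup>+y. ennreal (q ^ r) * indicator {y. ip n emb x y = 0} y \<partial>measure_pmf (pmf_of_multiset S))"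
  proof (rule nn_integral_mono)
    fix y
    show "emeasure (measure_pmf (if ip n emb x y \<noteq> 0 then return_pmf (False, ip_cost u n)
       else map_pmf (\<lambda>(b, c). (b, c + ip_cost u n)) (determine_codeword u n emb S r x))) ?E
       \<le> ennreal (q ^ r) * indicator {y. ip n emb x y = 0} y"
    proof (cases "ip n emb x y \<noteq> 0")
      case True then show ?thesis by simp
    next
      case False
      have pre: "(\<lambda>(b, c). (b, c + ip_cost u n)) -` ?E = ?E" by auto
      show ?thesis using False Suc.IH by (simp add: case_prod_unfold)
    qed
  qed
  also have "\<dots> = ennreal (q ^ r) * emeasure (measure_pmf (pmf_of_multiset S)) {y. ip n emb x y = 0}"
    by (rule nn_integral_cmult_indicator) simp
  also have "\<dots> = ennreal (q ^ Suc r)"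
    by (simp add: q_def measure_pmf.emeasure_eq_measure ennreal_mult'[symmetric] mult.commute)
  finally show ?case .
qed



lemma size_sum_count: "size M = (\<Sum>y\<in>set_mset M. count M y)"
  using size_multiset_overloaded_eq[of M] by simp

lemma prob_pmf_of_multiset:
  assumes "S \<noteq> {#}"
  shows "measure_pmf.prob (pmf_of_multiset S) {y. P y} = real (size (filter_mset P S)) / real (size S)"
proof -
  have "measure_pmf.prob (pmf_of_multiset S) {y. P y}
      = measure_pmf.prob (pmf_of_multiset S) ({y. P y} \<inter> set_mset S)"
    using measure_Int_set_pmf[of "pmf_of_multiset S" "{y. P y}"] assms by simp
  also have "\<dots> = (\<Sum>y\<in>{y. P y} \<inter> set_mset S. real (count S y) / real (size S))"
    using assms by (subst measure_measure_pmf_finite) auto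
  also have "\<dots> = real (\<Sum>y\<in>set_mset (filter_mset P S). count (filter_mset P S) y) / real (size S)"
    by (simp add: sum_divide_distrib) (intro sum.cong, auto)
  finally show ?thesis by (simp add: size_sum_count[of "filter_mset P S"])
qed


lemma prob_bound:
  fixes emb :: "'f::{finite,field} \<Rightarrow> 'e::{finite,field}"
  assumes T: "test_set n emb C p S" and x: "x \<in> vecs n" "x \<notin> C"
  shows "measure_pmf.prob (determine_codeword u n emb S R x) {(b, ops). b} \<le> p ^ R"
proof -
  have S: "S \<noteq> {#}" using T by (simp add: test_set_def)
  define q where "q = measure_pmf.prob (pmf_of_multiset S) {y. ip n emb x y = 0}"
  have ex: "\<exists>y\<in>#S. ip n emb x y \<noteq> 0" using T x by (auto simp: test_set_def)
  then have big: "real (size (filter_mset (\<lambda>y. ip n emb x y \<noteq> 0) S)) \<ge> (1 - p) * real (size S)"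
    using T x by (auto simp: test_set_def)
  have part: "size S = size (filter_mset (\<lambda>y. ip n emb x y = 0) S) + size (filter_mset (\<lambda>y. ip n emb x y \<noteq> 0) S)"
    by (metis multiset_partition size_union)
  have pos: "real (size S) > 0" using S by (simp add: nonempty_has_size)
  have q: "q = real (size (filter_mset (\<lambda>y. ip n emb x y = 0) S)) / real (size S)"
    unfolding q_def by (rule prob_pmf_of_multiset[OF S])
  have "q \<le> p" unfolding q using big part pos
    by (simp add: divide_le_eq algebra_simps)
  have q0: "q \<ge> 0" unfolding q_def by simp
  have "ennreal (measure_pmf.prob (determine_codeword u n emb S R x) {(b, ops). b}) \<le> ennreal (q ^ R)"
    using dc_prob[OF S, where u=u and r=R and x=x and n=n and emb=emb] by (simp add: q_def measure_pmf.emeasure_eq_measure)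
  then have "measure_pmf.prob (determine_codeword u n emb S R x) {(b, ops). b} \<le> q ^ R"
    using q0 by (simp add: ennreal_le_iff)
  also have "\<dots> \<le> p ^ R" using \<open>q \<le> p\<close> q0 by (rule power_mono)
  finally show ?thesis .
qed

lemma pow_bound:
  fixes p c :: real and n :: nat
  assumes "0 < p" "p < 1" "2 \<le> n" "0 < c"
  shows "p ^ nat \<lceil>(c / - ln p) * ln (real n)\<rceil> \<le> real n powr (- c)"
proof -
  define R1 where "R1 = c / - ln p"
  have lp: "ln p < 0" using assms by simp
  have R1: "R1 > 0" using divide_pos_neg[of c "ln p"] lp assms by (simp add: R1_def)
  have ln: "ln (real n) > 0" using assms by simp
  have "p ^ nat \<lceil>R1 * ln (real n)\<rceil> = p powr real (nat \<lceil>R1 * ln (real n)\<rceil>)"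
    using assms by (simp add: powr_realpow)
  also have "\<dots> \<le> p powr (R1 * ln (real n))"
    by (rule powr_mono') (use assms real_nat_ceiling_ge in auto)
  also have "\<dots> = exp (ln p * (R1 * ln (real n)))" using assms by (simp add: powr_def)
  also have "ln p * (R1 * ln (real n)) = - c * ln (real n)"
    using lp by (simp add: R1_def field_simps)
  also have "exp (- c * ln (real n)) = real n powr (- c)"
    using assms by (simp add: powr_def)
  finally show ?thesis by (simp add: R1_def)
qed

theorem theorem1:
  fixes emb :: "'f::{finite,field} \<Rightarrow> 'e::{finite,field}"
    and u :: nat
    and Cf :: "nat \<Rightarrow> (nat \<Rightarrow> 'e) set"
    and nf kf df :: "nat \<Rightarrow> nat"
    and \<alpha> \<beta> W c :: real
  assumes ext: "field_ext emb u" and u: "u \<ge> 1"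
    and codes: "\<forall>i\<ge>1. lin_code_d (nf i) (kf i) (df i) (Cf i)"
    and n_lim: "filterlim nf at_top sequentially"
    and k_mono: "\<forall>i\<ge>1. kf i \<le> kf (Suc i)"
    and \<alpha>: "0 < \<alpha>" "\<alpha> < 1" "liminf (\<lambda>i. ereal (real (kf i) / real (nf i))) \<ge> ereal \<alpha>"
    and \<beta>: "0 < \<beta>" "\<beta> < 1" "liminf (\<lambda>i. ereal (real (df i) / real (nf i))) \<ge> ereal \<beta>"
    and W: "\<forall>i\<ge>2. real (nf i) \<le> W * real (nf (i - 1))"
    and c: "c > 0"
  shows "\<exists>R1 A B p0. R1 > 0 \<and> A > 0 \<and> B > 0 \<and> 0 < p0 \<and> p0 < 1 \<and>
    (\<forall>n k (C :: (nat \<Rightarrow> 'f) set) H.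
       n \<ge> 2 \<and> k < n \<and> lin_code n k C \<and> parity_check n k C H \<longrightarrow>
       (\<exists>i\<ge>1. kf i \<ge> n - k \<and> real (nf i) \<le> A * real n \<and>
          (\<forall>G idx. gen_matrix (nf i) (Cf i) G \<and> distinct idx \<and> length idx = n - k
                  \<and> (\<forall>l\<in>set idx. l < kf i) \<longrightarrow>
             (let S = mset (rows_GtH (nf i) emb (map (\<lambda>l. G ! l) idx) H);
                  R = nat \<lceil>R1 * ln (real n)\<rceil>
              in test_set n emb C p0 S \<and>
                 real (storage u n S) \<le> B * real u * real n ^ 2 \<and>
                 (\<forall>x\<in>vecs n.
                    (\<forall>(b, ops)\<in>set_pmf (determine_codeword u n emb S R x).
                        real ops \<le> B * real u * real n * ln (real n)) \<and>
                    (x \<in> C \<longrightarrow> (\<forall>(b, ops)\<in>set_pmf (determine_codeword u n emb S R x). b)) \<and>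
                    (x \<notin> C \<longrightarrow> measure_pmf.prob (determine_codeword u n emb S R x) {(b, ops). b}
                                 \<le> real n powr (- c)))))))"
proof -
  have ev1: "eventually (\<lambda>i. ereal (\<alpha>/2) < ereal (real (kf i) / real (nf i))) sequentially"
    by (rule less_LiminfD) (rule less_le_trans[OF _ \<alpha>(3)], use \<alpha> in simp)
  have ev2: "eventually (\<lambda>i. ereal (\<beta>/2) < ereal (real (df i) / real (nf i))) sequentially"
    by (rule less_LiminfD) (rule less_le_trans[OF _ \<beta>(3)], use \<beta> in simp)
  have ev3: "eventually (\<lambda>i. 1 \<le> nf i) sequentially"
    using n_lim by (simp add: filterlim_at_top)
  obtain i0 where i0: "\<And>i. i \<ge> i0 \<Longrightarrow> ereal (\<alpha>/2) < ereal (real (kf i) / real (nf i))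
      \<and> ereal (\<beta>/2) < ereal (real (df i) / real (nf i)) \<and> 1 \<le> nf i"
    using eventually_conj[OF ev1 eventually_conj[OF ev2 ev3]] by (auto simp: eventually_sequentially)
  have kfb: "\<alpha>/2 * real (nf i) < real (kf i)" and dfb: "\<beta>/2 * real (nf i) < real (df i)"
    and nf1: "1 \<le> nf i" if "i \<ge> i0" for i
  proof -
    from i0[OF that] have a: "\<alpha>/2 < real (kf i) / real (nf i)" "\<beta>/2 < real (df i) / real (nf i)"
      and n1: "1 \<le> nf i" by auto
    have "real (nf i) > 0" using n1 by simp
    then show "\<alpha>/2 * real (nf i) < real (kf i)" "\<beta>/2 * real (nf i) < real (df i)" "1 \<le> nf i"
      using a n1 by (auto simp: less_divide_eq)
  qed
  define i1 where "i1 = Suc i0"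
  define p0 where "p0 = 1 - \<beta>/2"
  define R1 where "R1 = c / - ln p0"
  define A where "A = real (nf i1) + max W 0 * 2 / \<alpha> + 1"
  define B where "B = A + 2 * R1 + 2 / ln 2"
  have p0: "0 < p0" "p0 < 1" using \<beta> by (auto simp: p0_def)
  have lp: "ln p0 < 0" using p0 by simp
  have R1: "R1 > 0" using divide_pos_neg[of c "ln p0"] lp c by (simp add: R1_def)
  have A0: "A > 0" using \<alpha> by (simp add: A_def add_nonneg_pos)
  have l2: "ln (2::real) > 0" by simp
  have B0: "B > 0" using A0 R1 l2 by (simp add: B_def add_pos_pos)
  have mw: "0 \<le> max W 0 * 2 / \<alpha>" using \<alpha> by (intro divide_nonneg_pos) auto
  have AB: "A \<le> B" using R1 l2 by (simp add: B_def)
  have AW: "max W 0 * 2 / \<alpha> \<le> A" "real (nf i1) \<le> A" using mw by (auto simp: A_def)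
  show ?thesis
  proof (rule exI[of _ R1], rule exI[of _ A], rule exI[of _ B], rule exI[of _ p0], intro conjI R1 A0 B0 p0 allI impI)
    fix n k and C :: "(nat \<Rightarrow> 'f) set" and H
    assume asm: "2 \<le> n \<and> k < n \<and> lin_code n k C \<and> parity_check n k C H"
    then have n2: "2 \<le> n" and H: "parity_check n k C H" by auto
    have ex: "\<exists>i. i1 \<le> i \<and> n - k \<le> kf i"
    proof -
      have "eventually (\<lambda>i. nat \<lceil>2 * real n / \<alpha>\<rceil> \<le> nf i \<and> i1 \<le> i) sequentially"
        using n_lim unfolding filterlim_at_top
        by (intro eventually_conj) (blast, simp add: eventually_ge_at_top)
      then obtain i where i: "nat \<lceil>2 * real n / \<alpha>\<rceil> \<le> nf i" "i1 \<le> i"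
        by (auto simp: eventually_sequentially)
      have "2 * real n / \<alpha> \<le> real (nf i)" using i(1) by simp
      then have "\<alpha>/2 * (2 * real n / \<alpha>) \<le> \<alpha>/2 * real (nf i)" using \<alpha> by (intro mult_left_mono) auto
      also have "\<dots> < real (kf i)" using kfb[of i] i(2) by (simp add: i1_def)
      finally have "real n < real (kf i)" using \<alpha> by simp
      then show ?thesis using i(2) by (intro exI[of _ i]) auto
    qed
    define i where "i = (LEAST i. i1 \<le> i \<and> n - k \<le> kf i)"
    have i: "i1 \<le> i" "n - k \<le> kf i" using LeastI_ex[OF ex] by (auto simp: i_def)
    have nfA: "real (nf i) \<le> A * real n"
    proof (cases "i = i1")
      case True
      have "real (nf i) \<le> real (nf i) * real n" using n2 mult_left_mono[of 1 "real n" "real (nf i)"] by simp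
      also have "\<dots> \<le> A * real n" using AW True by (intro mult_right_mono) auto
      finally show ?thesis .
    next
      case False
      define j where "j = i - 1"
      have j: "i1 \<le> j" "j < i" "i = Suc j" using False i(1) by (auto simp: j_def i1_def)
      have "\<not> (i1 \<le> j \<and> n - k \<le> kf j)" unfolding i_def by (rule not_less_Least) (use j in \<open>simp add: i_def\<close>)
      then have "kf j < n" using j by auto
      then have "\<alpha>/2 * real (nf j) < real n" using kfb[of j] j by (simp add: i1_def)
      then have nfj: "real (nf j) \<le> 2 * real n / \<alpha>" using \<alpha> by (simp add: field_simps)
      have "i \<ge> 2" using j by (simp add: i1_def)
      then have "real (nf i) \<le> W * real (nf (i - 1))" using W by blast
      also have "\<dots> \<le> max W 0 * real (nf j)" by (simp add: j_def mult_right_mono)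
      also have "\<dots> \<le> max W 0 * (2 * real n / \<alpha>)" using nfj by (intro mult_left_mono) auto
      also have "\<dots> = (max W 0 * 2 / \<alpha>) * real n" by simp
      also have "\<dots> \<le> A * real n" using AW by (intro mult_right_mono) auto
      finally show ?thesis .
    qed
    have i0i: "i0 \<le> i" using i by (simp add: i1_def)
    show "\<exists>i\<ge>1. kf i \<ge> n - k \<and> real (nf i) \<le> A * real n \<and>
          (\<forall>G idx. gen_matrix (nf i) (Cf i) G \<and> distinct idx \<and> length idx = n - k
                  \<and> (\<forall>l\<in>set idx. l < kf i) \<longrightarrow>
             (let S = mset (rows_GtH (nf i) emb (map (\<lambda>l. G ! l) idx) H);
                  R = nat \<lceil>R1 * ln (real n)\<rceil>
              in test_set n emb C p0 S \<and>
                 real (storage u n S) \<le> B * real u * real n ^ 2 \<and>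
                 (\<forall>x\<in>vecs n.
                    (\<forall>(b, ops)\<in>set_pmf (determine_codeword u n emb S R x).
                        real ops \<le> B * real u * real n * ln (real n)) \<and>
                    (x \<in> C \<longrightarrow> (\<forall>(b, ops)\<in>set_pmf (determine_codeword u n emb S R x). b)) \<and>
                    (x \<notin> C \<longrightarrow> measure_pmf.prob (determine_codeword u n emb S R x) {(b, ops). b}
                                 \<le> real n powr (- c)))))"
    proof (intro exI[of _ i] conjI allI impI)
      show "1 \<le> i" using i by (simp add: i1_def)
      show "n - k \<le> kf i" by (rule i(2))
      show "real (nf i) \<le> A * real n" by (rule nfA)
      fix G idx
      assume Gi: "gen_matrix (nf i) (Cf i) G \<and> distinct idx \<and> length idx = n - k \<and> (\<forall>l\<in>set idx. l < kf i)"
      define S where "S = mset (rows_GtH (nf i) emb (map (\<lambda>l. G ! l) idx) H)"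
      define R where "R = nat \<lceil>R1 * ln (real n)\<rceil>"
      have m0: "0 < nf i" using nf1[OF i0i] by simp
      have dm: "(1 - p0) * real (nf i) \<le> real (df i)" using dfb[OF i0i] by (simp add: p0_def)
      have codei: "lin_code_d (nf i) (kf i) (df i) (Cf i)" using codes \<open>1 \<le> i\<close> by auto
      have T: "test_set n emb C p0 S"
        unfolding S_def using Gi
        by (intro test_set_lemma[OF ext codei _ _ _ _ H m0 p0 dm]) auto
      have Sne: "S \<noteq> {#}" using T by (simp add: test_set_def)
      have sizeS: "size S = nf i" by (simp add: S_def rows_GtH_def)
      have stor: "real (storage u n S) \<le> B * real u * real n ^ 2"
      proof -
        have "real (storage u n S) = real u * real n * real (nf i)" by (simp add: storage_def sizeS)
        also have "\<dots> \<le> real u * real n * (A * real n)" using nfA by (intro mult_left_mono) auto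
        also have "\<dots> \<le> real u * real n * (B * real n)" using AB by (intro mult_left_mono mult_right_mono) auto
        finally show ?thesis by (simp add: power2_eq_square mult_ac)
      qed
      have lnn: "ln 2 \<le> ln (real n)" using n2 by simp
      have lnn0: "0 \<le> ln (real n)" using n2 by simp
      have Rb: "real R \<le> R1 * ln (real n) + 1"
      proof -
        have "0 \<le> R1 * ln (real n)" using R1 n2 by simp
        then show ?thesis unfolding R_def by (simp add: of_nat_int_ceiling)
      qed
      have opsb: "real ops \<le> B * real u * real n * ln (real n)"
        if "(b, ops) \<in> set_pmf (determine_codeword u n emb S R x)" for b ops x
      proof -
        have "ops \<le> R * ip_cost u n" by (rule dc_ops[OF Sne that])
        also have "ip_cost u n \<le> 2 * u * n" by (simp add: ip_cost_def)
        finally have "real ops \<le> real R * (2 * real u * real n)"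
          by (metis (mono_tags, lifting) le_trans mult_le_mono2 of_nat_le_iff of_nat_mult of_nat_numeral)
        also have "\<dots> \<le> (R1 * ln (real n) + 1) * (2 * real u * real n)"
          using Rb by (intro mult_right_mono) auto
        also have "R1 * ln (real n) + 1 \<le> (R1 + 1 / ln 2) * ln (real n)"
          using lnn l2 by (simp add: algebra_simps divide_simps)
        also have "(R1 + 1 / ln 2) * ln (real n) * (2 * real u * real n)
                 = (2 * R1 + 2 / ln 2) * real u * real n * ln (real n)" by (simp add: algebra_simps)
        also have "\<dots> \<le> B * real u * real n * ln (real n)"
          using A0 lnn0 by (intro mult_right_mono) (auto simp: B_def)
        finally show ?thesis using lnn l2 by (simp add: mult_right_mono)
      qed
      show "let S = mset (rows_GtH (nf i) emb (map (\<lambda>l. G ! l) idx) H);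
                  R = nat \<lceil>R1 * ln (real n)\<rceil>
              in test_set n emb C p0 S \<and>
                 real (storage u n S) \<le> B * real u * real n ^ 2 \<and>
                 (\<forall>x\<in>vecs n.
                    (\<forall>(b, ops)\<in>set_pmf (determine_codeword u n emb S R x).
                        real ops \<le> B * real u * real n * ln (real n)) \<and>
                    (x \<in> C \<longrightarrow> (\<forall>(b, ops)\<in>set_pmf (determine_codeword u n emb S R x). b)) \<and>
                    (x \<notin> C \<longrightarrow> measure_pmf.prob (determine_codeword u n emb S R x) {(b, ops). b}
                                 \<le> real n powr (- c)))"
        unfolding Let_def S_def[symmetric] R_def[symmetric]
      proof (intro conjI[OF T] conjI[OF stor] ballI)
        fix x :: "nat \<Rightarrow> 'f" assume x: "x \<in> vecs n"
        have P1: "\<forall>(b, ops)\<in>set_pmf (determine_codeword u n emb S R x).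
                        real ops \<le> B * real u * real n * ln (real n)"
          using opsb by auto
        have P2: "\<forall>(b, ops)\<in>set_pmf (determine_codeword u n emb S R x). b" if "x \<in> C"
        proof -
          have "\<forall>y\<in>#S. ip n emb x y = 0" using T x that by (simp add: test_set_def)
          then show ?thesis using dc_true[OF Sne] by blast
        qed
        have P3: "measure_pmf.prob (determine_codeword u n emb S R x) {(b, ops). b} \<le> real n powr (- c)"
          if "x \<notin> C"
        proof -
          have "measure_pmf.prob (determine_codeword u n emb S R x) {(b, ops). b} \<le> p0 ^ R"
            by (rule prob_bound[OF T x that])
          also have "\<dots> \<le> real n powr (- c)"
            unfolding R_def R1_def by (rule pow_bound[OF p0 n2 c])
          finally show ?thesis .
        qed
        show "(\<forall>(b, ops)\<in>set_pmf (determine_codeword u n emb S R x).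
                        real ops \<le> B * real u * real n * ln (real n)) \<and>
                    (x \<in> C \<longrightarrow> (\<forall>(b, ops)\<in>set_pmf (determine_codeword u n emb S R x). b)) \<and>
                    (x \<notin> C \<longrightarrow> measure_pmf.prob (determine_codeword u n emb S R x) {(b, ops). b}
                                 \<le> real n powr (- c))"
          using P1 P2 P3 by blast
      qed
    qed
  qed
qed

end
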